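(* Let $q\in\mathbb{C}\setminus\{0\}$, fix a square root $q^{1/2}$, and let $H$ be the Hopf algebra generated by $X,g,g^{-1}$ with relations $gX=qXg$, $gg^{-1}=g^{-1}g=1$, coproduct $\Delta g=g\otimes g$, $\Delta X=X\otimes g^{-1}+g\otimes X$, counit $\epsilon(g)=1,\epsilon(X)=0$ (the elements $g^kX^m$, $k\in\mathbb{Z}$, $m\in\mathbb{Z}_{\ge0}$, form a basis). Define the linear functional $D_q:H\to\mathbb{C}$ by $D_q(g^kX^m)=\delta_{m,1}q^{k/2}$. Then for every $n\ge1$, $k\in\mathbb{Z}$, $m\ge 0$, the $n$-fold convolution power $D_q^n=D_q^{\otimes n}\circ\Delta^{n-1}$ satisfies \[D_q^n(g^kX^m)=\delta_{n,m}\,[[m]]_q!\;q^{km/2},\] where $[[m]]_q=q^{m-1}+q^{m-3}+\cdots+q^{1-m}$ and $[[m]]_q!=[[1]]_q[[2]]_q\cdots[[m]]_q$. Equivalently, for all $i,j\in\mathbb{Z}$, $D_q^n(g^iX^mg^j)=\delta_{n,m}[[m]]_q!\,q^{(i-j)m/2}$.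
   Context: $\Delta^{n-1}:H\to H^{\otimes n}$ denotes the iterated coproduct ($\Delta^0=\mathrm{id}$). *)

theory Defs
  imports Complex_Main
begin

text \<open>A basis element g^k X^m of H is encoded as the pair (k, m) :: int \<times> nat.
  A basis element of the n-fold tensor power H^{\<otimes> n} is a list of n such pairs.
  Elements of H (resp. of tensor powers) are represented as formal finite sums,
  i.e. lists of (coefficient, basis element) pairs; all maps below are defined on
  basis elements and extended linearly.\<close>

type_synonym hb = "int \<times> nat"

text \<open>Product of basis elements in H: since g X = q X g we have X g = q^{-1} g X,
  hence (g^a X^b)(g^c X^d) = q^{-bc} g^{a+c} X^{b+d}.\<close>
definition hmul :: "complex \<Rightarrow> hb \<Rightarrow> hb \<Rightarrow> complex \<times> hb" where
  "hmul q x y = (q powi (- (int (snd x) * fst y)), (fst x + fst y, snd x + snd y))"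

definition hprod :: "complex \<Rightarrow> (complex \<times> hb) list \<Rightarrow> (complex \<times> hb) list \<Rightarrow> (complex \<times> hb) list" where
  "hprod q u v = concat (map (\<lambda>(a, x). map (\<lambda>(b, y). (a * b * fst (hmul q x y), snd (hmul q x y))) v) u)"

fun tmul_b :: "complex \<Rightarrow> hb list \<Rightarrow> hb list \<Rightarrow> complex \<times> hb list" where
  "tmul_b q (x # xs) (y # ys) =
     (fst (hmul q x y) * fst (tmul_b q xs ys), snd (hmul q x y) # snd (tmul_b q xs ys))"
| "tmul_b q _ _ = (1, [])"

definition tmul :: "complex \<Rightarrow> (complex \<times> hb list) list \<Rightarrow> (complex \<times> hb list) list \<Rightarrow> (complex \<times> hb list) list" where
  "tmul q u v = concat (map (\<lambda>(a, s). map (\<lambda>(b, t). (a * b * fst (tmul_b q s t), snd (tmul_b q s t))) v) u)"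

fun tpow :: "complex \<Rightarrow> nat \<Rightarrow> (complex \<times> hb list) list \<Rightarrow> nat \<Rightarrow> (complex \<times> hb list) list" where
  "tpow q n u 0 = [(1, replicate n (0, 0))]"
| "tpow q n u (Suc m) = tmul q (tpow q n u m) u"

text \<open>Coproduct (algebra map determined by \<Delta> g = g \<otimes> g, \<Delta> X = X \<otimes> g^{-1} + g \<otimes> X):
  \<Delta>(g^k X^m) = (g \<otimes> g)^k (X \<otimes> g^{-1} + g \<otimes> X)^m.\<close>
definition coprod :: "complex \<Rightarrow> hb \<Rightarrow> (complex \<times> hb list) list" where
  "coprod q b = tmul q [(1, [(fst b, 0), (fst b, 0)])]
                       (tpow q 2 [(1, [(0, 1), (-1, 0)]), (1, [(1, 0), (0, 1)])] (snd b))"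

text \<open>Iterated coproduct \<Delta>^n : H \<rightarrow> H^{\<otimes>(n+1)}, \<Delta>^0 = id,
  \<Delta>^{n+1} = (\<Delta> \<otimes> id^{\<otimes> n}) \<circ> \<Delta>^n, applied to a basis element.\<close>
fun iter_coprod :: "complex \<Rightarrow> nat \<Rightarrow> hb \<Rightarrow> (complex \<times> hb list) list" where
  "iter_coprod q 0 b = [(1, [b])]"
| "iter_coprod q (Suc n) b =
     concat (map (\<lambda>(c, t). map (\<lambda>(d, u). (c * d, u @ tl t)) (coprod q (hd t))) (iter_coprod q n b))"

text \<open>The functional D_q(g^k X^m) = \<delta>_{m,1} q^{k/2}, where q^{1/2} = s is the fixed square root.\<close>
definition Dq :: "complex \<Rightarrow> hb \<Rightarrow> complex" where
  "Dq s b = (if snd b = 1 then s powi fst b else 0)"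

definition conv_pow :: "complex \<Rightarrow> complex \<Rightarrow> nat \<Rightarrow> hb \<Rightarrow> complex" where
  "conv_pow q s n b = (\<Sum>(c, t) \<leftarrow> iter_coprod q (n - 1) b. c * (\<Prod>x \<leftarrow> t. Dq s x))"

definition conv_pow_lin :: "complex \<Rightarrow> complex \<Rightarrow> nat \<Rightarrow> (complex \<times> hb) list \<Rightarrow> complex" where
  "conv_pow_lin q s n u = (\<Sum>(c, b) \<leftarrow> u. c * conv_pow q s n b)"

definition qint :: "complex \<Rightarrow> nat \<Rightarrow> complex" where
  "qint q j = (\<Sum>i<j. q powi (int j - 1 - 2 * int i))"

definition qfact :: "complex \<Rightarrow> nat \<Rightarrow> complex" where
  "qfact q m = (\<Prod>j = 1..m. qint q j)"

end

theory Submission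
  imports Defs
begin

definition wsum :: "(complex \<times> 'a) list \<Rightarrow> ('a \<Rightarrow> complex) \<Rightarrow> complex" where
  "wsum w f = (\<Sum>(c, t) \<leftarrow> w. c * f t)"

lemma wsum_Nil[simp]: "wsum [] f = 0" by (simp add: wsum_def)
lemma wsum_Cons[simp]: "wsum ((c,t) # w) f = c * f t + wsum w f" by (simp add: wsum_def)
lemma wsum_append[simp]: "wsum (u @ v) f = wsum u f + wsum v f" by (simp add: wsum_def)

lemma wsum_cong: "(\<And>c t. (c,t) \<in> set w \<Longrightarrow> f t = g t) \<Longrightarrow> wsum w f = wsum w g"
proof (induction w)
  case Nil then show ?case by simp
next
  case (Cons x w)
  obtain a b where x: "x = (a,b)" by force
  have "f b = g b" using Cons.prems[of a b] by (simp add: x)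
  moreover have "wsum w f = wsum w g" using Cons.IH Cons.prems by auto
  ultimately show ?case by (simp add: x)
qed

lemma wsum_map: "wsum (map (\<lambda>(b, t). (a * b * h t, k t)) v) f = a * wsum v (\<lambda>t. h t * f (k t))"
  by (induction v) (auto simp: algebra_simps)

lemma wsum_tmul: "wsum (tmul q u v) f =
   wsum u (\<lambda>s. wsum v (\<lambda>t. fst (tmul_b q s t) * f (snd (tmul_b q s t))))"
proof (induction u)
  case Nil then show ?case by (simp add: tmul_def)
next
  case (Cons x u)
  obtain a s where x: "x = (a,s)" by force
  have "tmul q (x # u) v = map (\<lambda>(b, t). (a * b * fst (tmul_b q s t), snd (tmul_b q s t))) v @ tmul q u v"
    by (simp add: tmul_def x)
  then show ?case using Cons by (simp add: x wsum_map)
qed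

lemma len_tmul_b: "length (snd (tmul_b q s t)) = min (length s) (length t)"
  by (induction q s t rule: tmul_b.induct) auto

lemma set_tmul: "(c, t) \<in> set (tmul q u v) \<Longrightarrow> \<exists>a s b r. (a,s) \<in> set u \<and> (b,r) \<in> set v \<and> t = snd (tmul_b q s r)"
  by (auto simp: tmul_def)

definition gen :: "(complex \<times> hb list) list" where
  "gen = [(1, [(0, 1), (-1, 0)]), (1, [(1, 0), (0, 1)])]"

lemma tpow_len: "(c, t) \<in> set (tpow q 2 gen m) \<Longrightarrow> length t = 2"
proof (induction m arbitrary: c t)
  case 0 then show ?case by simp
next
  case (Suc m)
  then obtain a s b r where "(a,s) \<in> set (tpow q 2 gen m)" "(b,r) \<in> set gen" "t = snd (tmul_b q s r)"
    using set_tmul by (metis tpow.simps(2))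
  with Suc.IH show ?case by (auto simp: len_tmul_b gen_def)
qed

definition Top :: "complex \<Rightarrow> (hb \<Rightarrow> hb \<Rightarrow> complex) \<Rightarrow> hb \<Rightarrow> hb \<Rightarrow> complex" where
  "Top q F x y = fst (hmul q x (0,1)) * fst (hmul q y (-1,0)) * F (snd (hmul q x (0,1))) (snd (hmul q y (-1,0)))
     + fst (hmul q x (1,0)) * fst (hmul q y (0,1)) * F (snd (hmul q x (1,0))) (snd (hmul q y (0,1)))"

lemma Top_explicit: "Top q F (a,b) (c,d) = q powi int d * F (a, b+1) (c-1, d) + q powi (- int b) * F (a+1, b) (c, d+1)"
  by (simp add: Top_def hmul_def)

lemma tpow_wsum: "wsum (tpow q 2 gen m) (\<lambda>t. F (t!0) (t!1)) = (Top q ^^ m) F (0,0) (0,0)"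
proof (induction m arbitrary: F)
  case 0 then show ?case by (simp add: numeral_2_eq_2)
next
  case (Suc m)
  have "wsum (tpow q 2 gen (Suc m)) (\<lambda>t. F (t!0) (t!1)) =
     wsum (tpow q 2 gen m) (\<lambda>s. wsum gen (\<lambda>t. fst (tmul_b q s t) * F (snd (tmul_b q s t) ! 0) (snd (tmul_b q s t) ! 1)))"
    by (simp add: wsum_tmul)
  also have "\<dots> = wsum (tpow q 2 gen m) (\<lambda>t. Top q F (t!0) (t!1))"
  proof (rule wsum_cong)
    fix c t assume "(c,t) \<in> set (tpow q 2 gen m)"
    then have "length t = 2" by (rule tpow_len)
    then obtain x y where t: "t = [x,y]"
      by (metis (no_types, lifting) One_nat_def Suc_length_conv length_0_conv numeral_2_eq_2)
    show "wsum gen (\<lambda>t'. fst (tmul_b q t t') * F (snd (tmul_b q t t') ! 0) (snd (tmul_b q t t') ! 1)) = Top q F (t!0) (t!1)"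
      by (simp add: t gen_def Top_def)
  qed
  also have "\<dots> = (Top q ^^ Suc m) F (0,0) (0,0)"
    using Suc.IH[of "Top q F"] by (simp add: funpow_Suc_right del: funpow.simps)
  finally show ?case .
qed


lemma q_powi: "((s::complex)^2) powi z = s powi (2*z)"
  by (simp add: power_int_mult)

lemma q_pow_nat: "((s::complex)^2) ^ d = s powi (2*int d)"
  by (metis power_int_of_nat q_powi)

lemma powi_shift2: "(s::complex) \<noteq> 0 \<Longrightarrow> s powi 2 * s powi x = s powi (x + 2)"
  by (simp add: power_int_add mult.commute)

definition E :: "complex \<Rightarrow> complex \<Rightarrow> nat \<Rightarrow> int \<Rightarrow> nat \<Rightarrow> hb \<Rightarrow> hb \<Rightarrow> complex" where
  "E s C p k m x y = (
   if snd y = 1 \<and> snd x + m = p then C * s powi ((k + fst x) * int p + k + fst y + int m)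
   else if snd y = 0 \<and> snd x + m = p + 1 then
     C * s powi ((k + fst x + 1) * int p + k + fst y - int m + 1) *
       (\<Sum>i<m. s powi (2 * (int m - 1 - int (snd x) - 2 * int i)))
   else 0)"

lemma Top_E:
  assumes s: "s \<noteq> 0"
  shows "Top (s^2) (E s C p k m) (a,b) (c,d) = E s C p k (Suc m) (a,b) (c,d)"
proof -
  have T: "Top (s^2) (E s C p k m) (a,b) (c,d) =
    s powi (2 * int d) * E s C p k m (a, b+1) (c-1, d) + s powi (- 2 * int b) * E s C p k m (a+1, b) (c, d+1)"
    by (simp add: Top_explicit q_powi q_pow_nat del: power_int_of_nat)
  consider "d = 0" | "d = 1" | "d \<ge> 2" by linarith
  then show ?thesis
  proof cases
    case 1
    show ?thesis
    proof (cases "b + m = p")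
      case True
      define K where "K = (k + a + 1) * int p + k + c - int m"
      have e1: "E s C p k m (a, b+1) (c-1, d) = C * s powi K * (\<Sum>i<m. s powi (2 * (int m - 1 - int (b+1) - 2 * int i)))"
        using True 1 by (simp add: E_def K_def algebra_simps)
      have e2: "E s C p k m (a+1, b) (c, d+1) = C * s powi (K + 2 * int m)"
        using True 1 by (simp add: E_def K_def algebra_simps)
      have e3: "E s C p k (Suc m) (a,b) (c,d) = C * s powi K * (\<Sum>i<Suc m. s powi (2 * (int (Suc m) - 1 - int b - 2 * int i)))"
        using True 1 by (simp add: E_def K_def algebra_simps)
      have "(\<Sum>i<Suc m. s powi (2 * (int (Suc m) - 1 - int b - 2 * int i))) =
         s powi (2 * (int m - int b)) + (\<Sum>i<m. s powi (2 * (int m - 1 - int (b+1) - 2 * int i)))"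
        unfolding sum.lessThan_Suc_shift by (simp add: algebra_simps)
      moreover have "s powi (- 2 * int b) * (C * s powi (K + 2 * int m)) = C * s powi K * s powi (2 * (int m - int b))"
      proof -
        have "s powi (- 2 * int b) * s powi (K + 2 * int m) = s powi K * s powi (2 * (int m - int b))"
          using s by (simp add: power_int_add[symmetric] algebra_simps)
        then show ?thesis by (simp add: algebra_simps)
      qed
      ultimately show ?thesis unfolding T e1 e2 e3 using 1 by (simp add: algebra_simps)
    next
      case False
      then show ?thesis unfolding T using 1 by (simp add: E_def)
    qed
  next
    case 2
    show ?thesis
    proof (cases "b + Suc m = p")
      case True
      have "s powi 2 * s powi ((k + a) * int p + k + (c - 1) + int m) = s powi ((k + a) * int p + k + c + int (Suc m))"
        using powi_shift2[OF s, of "(k + a) * int p + k + (c - 1) + int m"] by (simp add: algebra_simps)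
      then show ?thesis unfolding T using 2 True by (simp add: E_def algebra_simps)
    next
      case False
      then show ?thesis unfolding T using 2 by (simp add: E_def)
    qed
  next
    case 3
    then show ?thesis unfolding T by (simp add: E_def)
  qed
qed


lemma coprod_eq: "coprod q (k,m) = tmul q [(1, [(k, 0), (k, 0)])] (tpow q 2 gen m)"
  by (simp add: coprod_def gen_def)

lemma len2: "length t = 2 \<Longrightarrow> \<exists>x y. t = [x,y]"
  by (metis (no_types, lifting) One_nat_def Suc_length_conv length_0_conv numeral_2_eq_2)

lemma coprod_len: "(c, t) \<in> set (coprod q b) \<Longrightarrow> length t = 2"
proof -
  assume a: "(c, t) \<in> set (coprod q b)"
  have e: "coprod q b = tmul q [(1, [(fst b, 0), (fst b, 0)])] (tpow q 2 gen (snd b))"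
    by (simp add: coprod_def gen_def)
  obtain a s d r where "(a,s) \<in> set [(1::complex, [(fst b, 0), (fst b, 0)])]" "(d,r) \<in> set (tpow q 2 gen (snd b))"
    "t = snd (tmul_b q s r)"
    using set_tmul[OF a[unfolded e]] by metis
  moreover have "length r = 2" using calculation(2) by (rule tpow_len)
  ultimately show ?thesis by (simp add: len_tmul_b)
qed

lemma coprod_wsum: "wsum (coprod q (k,m)) (\<lambda>t. F (t!0) (t!1)) =
   (Top q ^^ m) (\<lambda>x y. F (k + fst x, snd x) (k + fst y, snd y)) (0,0) (0,0)"
proof -
  have "wsum (coprod q (k,m)) (\<lambda>t. F (t!0) (t!1)) =
     wsum (tpow q 2 gen m) (\<lambda>t. fst (tmul_b q [(k, 0), (k, 0)] t) * F (snd (tmul_b q [(k, 0), (k, 0)] t) ! 0) (snd (tmul_b q [(k, 0), (k, 0)] t) ! 1))"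
    unfolding coprod_eq wsum_tmul wsum_Cons wsum_Nil by (simp only: mult_1 add_0_right)
  also have "\<dots> = wsum (tpow q 2 gen m) (\<lambda>t. (\<lambda>x y. F (k + fst x, snd x) (k + fst y, snd y)) (t!0) (t!1))"
  proof (rule wsum_cong)
    fix c t assume "(c,t) \<in> set (tpow q 2 gen m)"
    then obtain x y where t: "t = [x,y]" using tpow_len len2 by blast
    show "fst (tmul_b q [(k, 0), (k, 0)] t) * F (snd (tmul_b q [(k, 0), (k, 0)] t) ! 0) (snd (tmul_b q [(k, 0), (k, 0)] t) ! 1)
       = (\<lambda>x y. F (k + fst x, snd x) (k + fst y, snd y)) (t!0) (t!1)"
      by (simp add: t hmul_def)
  qed
  also have "\<dots> = (Top q ^^ m) (\<lambda>x y. F (k + fst x, snd x) (k + fst y, snd y)) (0,0) (0,0)"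
    by (rule tpow_wsum)
  finally show ?thesis .
qed

lemma iter_len: "(c, t) \<in> set (iter_coprod q j b) \<Longrightarrow> length t = Suc j"
proof (induction j arbitrary: c t)
  case 0 then show ?case by simp
next
  case (Suc j)
  then obtain c' t' d u where "(c',t') \<in> set (iter_coprod q j b)" "(d,u) \<in> set (coprod q (hd t'))" "t = u @ tl t'"
    by auto
  moreover have "length u = 2" using calculation(2) by (rule coprod_len)
  moreover have "length t' = Suc j" using calculation(1) by (rule Suc.IH)
  ultimately show ?case by simp
qed

definition Tc :: "complex \<Rightarrow> complex \<Rightarrow> (hb \<Rightarrow> complex) \<Rightarrow> hb \<Rightarrow> complex" where
  "Tc q s \<phi> y = wsum (coprod q y) (\<lambda>u. \<phi> (hd u) * prod_list (map (Dq s) (tl u)))"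

lemma wsum_map2: "wsum (map (\<lambda>(d, u). (a * d, g u)) v) f = a * wsum v (\<lambda>u. f (g u))"
  by (induction v) (auto simp: algebra_simps)

lemma wsum_concat: "wsum (concat (map (\<lambda>(c, t). map (\<lambda>(d, u). (c * d, G t u)) (H t)) w)) f =
   wsum w (\<lambda>t. wsum (H t) (\<lambda>u. f (G t u)))"
proof (induction w)
  case Nil then show ?case by simp
next
  case (Cons x w)
  obtain a b where x: "x = (a,b)" by force
  have "wsum (map (\<lambda>(d, u). (a * d, G b u)) (H b)) f = a * wsum (H b) (\<lambda>u. f (G b u))"
    by (rule wsum_map2)
  then show ?case using Cons by (simp add: x)
qed

lemma wsum_mult_right: "wsum w (\<lambda>u. f u * c) = wsum w f * c"
  by (induction w) (auto simp: algebra_simps)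

lemma iter_wsum: "wsum (iter_coprod q j b) (\<lambda>t. \<phi> (hd t) * prod_list (map (Dq s) (tl t))) = (Tc q s ^^ j) \<phi> b"
proof (induction j arbitrary: \<phi>)
  case 0 then show ?case by simp
next
  case (Suc j)
  have "wsum (iter_coprod q (Suc j) b) (\<lambda>t. \<phi> (hd t) * prod_list (map (Dq s) (tl t))) =
     wsum (iter_coprod q j b) (\<lambda>t. wsum (coprod q (hd t)) (\<lambda>u. \<phi> (hd (u @ tl t)) * prod_list (map (Dq s) (tl (u @ tl t)))))"
    unfolding iter_coprod.simps(2) by (rule wsum_concat[of "\<lambda>t u. u @ tl t" "\<lambda>t. coprod q (hd t)"])
  also have "\<dots> = wsum (iter_coprod q j b) (\<lambda>t. Tc q s \<phi> (hd t) * prod_list (map (Dq s) (tl t)))"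
  proof (rule wsum_cong)
    fix c t assume "(c,t) \<in> set (iter_coprod q j b)"
    have "wsum (coprod q (hd t)) (\<lambda>u. \<phi> (hd (u @ tl t)) * prod_list (map (Dq s) (tl (u @ tl t)))) =
      wsum (coprod q (hd t)) (\<lambda>u. (\<phi> (hd u) * prod_list (map (Dq s) (tl u))) * prod_list (map (Dq s) (tl t)))"
    proof (rule wsum_cong)
      fix d u assume "(d,u) \<in> set (coprod q (hd t))"
      then have "u \<noteq> []" using coprod_len by fastforce
      then show "\<phi> (hd (u @ tl t)) * prod_list (map (Dq s) (tl (u @ tl t))) =
        (\<phi> (hd u) * prod_list (map (Dq s) (tl u))) * prod_list (map (Dq s) (tl t))"
        by (simp add: mult.assoc)
    qed
    then show "wsum (coprod q (hd t)) (\<lambda>u. \<phi> (hd (u @ tl t)) * prod_list (map (Dq s) (tl (u @ tl t)))) =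
      Tc q s \<phi> (hd t) * prod_list (map (Dq s) (tl t))"
      using wsum_mult_right[of "coprod q (hd t)" "\<lambda>u. \<phi> (hd u) * prod_list (map (Dq s) (tl u))" "prod_list (map (Dq s) (tl t))"]
      unfolding Tc_def by (rule trans)
  qed
  also have "\<dots> = (Tc q s ^^ Suc j) \<phi> b"
    using Suc.IH[of "Tc q s \<phi>"] by (simp add: funpow_Suc_right del: funpow.simps)
  finally show ?case .
qed


definition phi :: "complex \<Rightarrow> complex \<Rightarrow> nat \<Rightarrow> hb \<Rightarrow> complex" where
  "phi s C p x = (if snd x = p then C * s powi (fst x * int p) else 0)"

lemma Top_pow_E:
  assumes "s \<noteq> 0"
  shows "(Top (s^2) ^^ m) (E s C p k 0) = E s C p k m"
proof (induction m)
  case 0 then show ?case by simp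
next
  case (Suc m)
  show ?case
  proof (intro ext)
    fix x y :: hb
    obtain a b where x: "x = (a,b)" by force
    obtain c d where y: "y = (c,d)" by force
    show "(Top (s\<^sup>2) ^^ Suc m) (E s C p k 0) x y = E s C p k (Suc m) x y"
      using Top_E[OF assms, of C p k m a b c d] Suc by (simp add: x y)
  qed
qed

lemma E0:
  assumes "s \<noteq> 0"
  shows "(\<lambda>x y. phi s C p (k + fst x, snd x) * Dq s (k + fst y, snd y)) = E s C p k 0"
proof (intro ext)
  fix x y :: hb
  obtain a b where x: "x = (a,b)" by force
  obtain c d where y: "y = (c,d)" by force
  have "s powi ((k + a) * int p) * s powi (k + c) = s powi ((k + a) * int p + k + c)"
    using assms by (simp add: power_int_add add.assoc)
  then show "phi s C p (k + fst x, snd x) * Dq s (k + fst y, snd y) = E s C p k 0 x y"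
    by (simp add: x y phi_def Dq_def E_def)
qed

lemma Tc_phi:
  assumes s: "s \<noteq> 0" and q: "q = s^2"
  shows "Tc q s (phi s C p) = phi s (C * qint q (p+1)) (p+1)"
proof (intro ext)
  fix x :: hb
  obtain k m where x: "x = (k,m)" by force
  have "Tc q s (phi s C p) (k,m) = wsum (coprod q (k,m)) (\<lambda>t. (\<lambda>x y. phi s C p x * Dq s y) (t!0) (t!1))"
    unfolding Tc_def
  proof (rule wsum_cong)
    fix c t assume "(c,t) \<in> set (coprod q (k,m))"
    then obtain x y where t: "t = [x,y]" using coprod_len len2 by blast
    show "phi s C p (hd t) * prod_list (map (Dq s) (tl t)) = (\<lambda>x y. phi s C p x * Dq s y) (t!0) (t!1)"
      by (simp add: t)
  qed
  also have "\<dots> = (Top q ^^ m) (\<lambda>x y. phi s C p (k + fst x, snd x) * Dq s (k + fst y, snd y)) (0,0) (0,0)"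
    by (rule coprod_wsum)
  also have "\<dots> = E s C p k m (0,0) (0,0)"
    using E0[OF s] Top_pow_E[OF s] q by simp
  also have "\<dots> = phi s (C * qint q (p+1)) (p+1) (k,m)"
  proof (cases "m = p + 1")
    case True
    have "qint q m = (\<Sum>i<m. s powi (2 * (int m - 1 - 2 * int i)))"
      unfolding qint_def q q_powi by simp
    moreover have "(k + 1) * int p + k - int m + 1 = k * int m" using True by (simp add: algebra_simps)
    ultimately show ?thesis using True by (simp add: E_def phi_def algebra_simps)
  next
    case False
    then show ?thesis by (simp add: E_def phi_def)
  qed
  finally show "Tc q s (phi s C p) x = phi s (C * qint q (p+1)) (p+1) x" by (simp add: x)
qed

lemma qfact_Suc: "qfact q (Suc j) = qfact q j * qint q (Suc j)"
  unfolding qfact_def by (simp add: prod.nat_ivl_Suc' mult.commute)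

lemma Tc_pow:
  assumes s: "s \<noteq> 0" and q: "q = s^2"
  shows "(Tc q s ^^ j) (Dq s) = phi s (qfact q (Suc j)) (Suc j)"
proof (induction j)
  case 0
  have "qfact q 1 = 1" by (simp add: qfact_def qint_def)
  then show ?case by (auto simp: phi_def Dq_def fun_eq_iff)
next
  case (Suc j)
  then show ?case using Tc_phi[OF s q, of "qfact q (Suc j)" "Suc j"] by (simp add: qfact_Suc)
qed

lemma conv_pow_eq:
  assumes s: "s \<noteq> 0" and q: "q = s^2" and n: "n \<ge> 1"
  shows "conv_pow q s n (k,m) = (if n = m then qfact q m * s powi (k * int m) else 0)"
proof -
  have "conv_pow q s n (k,m) = wsum (iter_coprod q (n-1) (k,m)) (\<lambda>t. prod_list (map (Dq s) t))"
    by (simp add: conv_pow_def wsum_def)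
  also have "\<dots> = wsum (iter_coprod q (n-1) (k,m)) (\<lambda>t. Dq s (hd t) * prod_list (map (Dq s) (tl t)))"
  proof (rule wsum_cong)
    fix c t assume "(c,t) \<in> set (iter_coprod q (n-1) (k,m))"
    then have "t \<noteq> []" using iter_len by fastforce
    then show "prod_list (map (Dq s) t) = Dq s (hd t) * prod_list (map (Dq s) (tl t))"
      by (cases t) auto
  qed
  also have "\<dots> = (Tc q s ^^ (n-1)) (Dq s) (k,m)" by (rule iter_wsum)
  also have "\<dots> = phi s (qfact q n) n (k,m)" using Tc_pow[OF s q, of "n-1"] n by simp
  finally show ?thesis by (auto simp: phi_def)
qed

theorem mainTheorem2:
  fixes q s :: complex and n :: nat
  assumes "q \<noteq> 0" and "s ^ 2 = q" and "n \<ge> 1"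
  shows "(\<forall>(k::int) (m::nat). conv_pow q s n (k, m) =
            (if n = m then qfact q m * s powi (k * int m) else 0))
       \<and> (\<forall>(i::int) (j::int) (m::nat).
            conv_pow_lin q s n (hprod q (hprod q [(1, (i, 0))] [(1, (0, m))]) [(1, (j, 0))]) =
            (if n = m then qfact q m * s powi ((i - j) * int m) else 0))"
proof -
  have s: "s \<noteq> 0" using assms by auto
  have q: "q = s^2" using assms by simp
  have A: "\<forall>(k::int) (m::nat). conv_pow q s n (k, m) =
            (if n = m then qfact q m * s powi (k * int m) else 0)"
    using conv_pow_eq[OF s q assms(3)] by blast
  have B: "conv_pow_lin q s n (hprod q (hprod q [(1, (i, 0))] [(1, (0, m))]) [(1, (j, 0))]) =
            (if n = m then qfact q m * s powi ((i - j) * int m) else 0)" for i j :: int and m :: nat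
  proof -
    have h: "hprod q (hprod q [(1, (i, 0))] [(1, (0, m))]) [(1, (j, 0))] = [(q powi (- (int m * j)), (i + j, m))]"
      by (simp add: hprod_def hmul_def)
    have e: "q powi (- (int m * j)) * s powi ((i + j) * int m) = s powi ((i - j) * int m)"
    proof -
      have "q powi (- (int m * j)) * s powi ((i + j) * int m) = s powi (2 * (- (int m * j))) * s powi ((i + j) * int m)"
        unfolding q q_powi by simp
      also have "\<dots> = s powi (2 * (- (int m * j)) + (i + j) * int m)"
        using s by (intro power_int_add[symmetric]) auto
      also have "2 * (- (int m * j)) + (i + j) * int m = (i - j) * int m" by (simp add: algebra_simps)
      finally show ?thesis .
    qed
    show ?thesis unfolding h conv_pow_lin_def using A e by (simp add: algebra_simps)
  qed
  show ?thesis using A B by blast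
qed

end
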